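(* If $\{\mathcal P_1,\dots,\mathcal P_r\}$ is a $(v,\{k_1,\dots,k_r\})$-MOHS on a half-set $V$, then $k_1+\dots+k_r-r\le v-1$, and equality holds if and only if the associated Heffter space $(V,\bigcup_{i=1}^r\mathcal P_i)$ is a linear space, i.e. every two distinct points of $V$ lie in exactly one block of $\bigcup_i\mathcal P_i$.
   Context: A half-set of an abelian group $G$ of odd order $2v+1\ge7$ is a subset $V\subseteq G\setminus\{0\}$ containing exactly one element of each pair $\{g,-g\}$, $g\ne0$. A $(v,k)$ Heffter system on $V$ is a partition of $V$ into blocks of size $k$, each summing to $0$ in $G$. Two Heffter systems on the same half-set are orthogonal if every block of one meets every block of the other in at most one element. A $(v,\{k_1,\dots,k_r\})$-MOHS is a set of pairwise orthogonal Heffter systems $\mathcal P_1,\dots,\mathcal P_r$ on a common half-set of an abelian group of order $2v+1$, with $\mathcal P_i$ a $(v,k_i)$ Heffter system. *)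

theory Defs
  imports Main
begin

definition half_set :: "'a::ab_group_add set \<Rightarrow> bool" where
  "half_set V \<longleftrightarrow> V \<subseteq> UNIV - {0} \<and>
     (\<forall>g. g \<noteq> 0 \<longrightarrow> ((g \<in> V) \<noteq> (- g \<in> V)))"

definition heffter_system :: "'a::ab_group_add set \<Rightarrow> nat \<Rightarrow> 'a set set \<Rightarrow> bool" where
  "heffter_system V k P \<longleftrightarrow>
     \<Union>P = V \<and> {} \<notin> P \<and>
     (\<forall>B\<in>P. \<forall>C\<in>P. B \<noteq> C \<longrightarrow> B \<inter> C = {}) \<and>
     (\<forall>B\<in>P. finite B \<and> card B = k \<and> \<Sum>B = 0)"

definition orthogonal_hs :: "'a set set \<Rightarrow> 'a set set \<Rightarrow> bool" where
  "orthogonal_hs P Q \<longleftrightarrow> (\<forall>B\<in>P. \<forall>C\<in>Q. card (B \<inter> C) \<le> 1)"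

text \<open>A (v,{k_0,...,k_(r-1)})-MOHS on the half-set V, indexed by i < r.\<close>
definition MOHS :: "nat \<Rightarrow> 'a::{ab_group_add,finite} set \<Rightarrow> nat \<Rightarrow> (nat \<Rightarrow> nat) \<Rightarrow> (nat \<Rightarrow> 'a set set) \<Rightarrow> bool" where
  "MOHS v V r k P \<longleftrightarrow> card (UNIV :: 'a set) = 2 * v + 1 \<and> half_set V \<and>
     (\<forall>i<r. heffter_system V (k i) (P i)) \<and>
     (\<forall>i<r. \<forall>j<r. i \<noteq> j \<longrightarrow> orthogonal_hs (P i) (P j))"

definition linear_space :: "'a set \<Rightarrow> 'a set set \<Rightarrow> bool" where
  "linear_space V \<B> \<longleftrightarrow> (\<forall>x\<in>V. \<forall>y\<in>V. x \<noteq> y \<longrightarrow> (\<exists>!B. B \<in> \<B> \<and> x \<in> B \<and> y \<in> B))"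

end

theory Submission
  imports Defs
begin

lemma card_half:
  fixes V :: "'a::{ab_group_add,finite} set"
  assumes hs: "half_set V" and c: "card (UNIV :: 'a set) = 2 * v + 1"
  shows "card V = v"
proof -
  have nz: "0 \<notin> V" using hs unfolding half_set_def by blast
  have sg: "\<And>g. g \<noteq> 0 \<Longrightarrow> (g \<in> V) = (- g \<notin> V)"
    using hs unfolding half_set_def by metis
  have d: "V \<inter> uminus ` V = {}"
  proof (rule ccontr)
    assume "V \<inter> uminus ` V \<noteq> {}"
    then obtain h where h: "h \<in> V" "- h \<in> V" by blast
    then have "h \<noteq> 0" using nz by metis
    then show False using sg h by blast
  qed
  have u: "V \<union> uminus ` V = UNIV - {0}"
  proof
    show "V \<union> uminus ` V \<subseteq> UNIV - {0}"
    proof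
      fix g assume "g \<in> V \<union> uminus ` V"
      then have "g \<in> V \<or> - g \<in> V" by (metis Un_iff image_iff minus_minus)
      then show "g \<in> UNIV - {0}" using nz by (metis DiffI UNIV_I neg_0_equal_iff_equal singletonD)
    qed
    show "UNIV - {0} \<subseteq> V \<union> uminus ` V"
    proof
      fix g assume "g \<in> (UNIV::'a set) - {0}"
      then have "g \<in> V \<or> - g \<in> V" using sg by blast
      then show "g \<in> V \<union> uminus ` V" by (metis UnI1 UnI2 image_eqI minus_minus)
    qed
  qed
  have ci: "card (uminus ` V) = card V" by (simp add: card_image)
  have "card (V \<union> uminus ` V) = card V + card (uminus ` V)"
    using d by (simp add: card_Un_disjoint)
  moreover have "card ((UNIV::'a set) - {0}) = 2 * v" using c by simp
  ultimately show ?thesis using u ci by simp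
qed

lemma key:
  fixes V :: "'a::{ab_group_add,finite} set"
  assumes hs: "\<forall>i<r. heffter_system V (k i) (P i)"
    and orth: "\<forall>i<r. \<forall>j<r. i \<noteq> j \<longrightarrow> orthogonal_hs (P i) (P j)"
    and cV: "card V = v" and x: "x \<in> V"
  shows "(\<Sum>i<r. int (k i)) - int r \<le> int v - 1 \<and>
    ((\<Sum>i<r. int (k i)) - int r = int v - 1 \<longleftrightarrow>
      (\<forall>y\<in>V. y \<noteq> x \<longrightarrow> (\<exists>i<r. \<exists>B\<in>P i. x \<in> B \<and> y \<in> B)))"
proof -
  have hsi: "\<And>i. i<r \<Longrightarrow> \<Union>(P i) = V \<and> (\<forall>B\<in>P i. \<forall>C\<in>P i. B \<noteq> C \<longrightarrow> B \<inter> C = {})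
      \<and> (\<forall>B\<in>P i. finite B \<and> card B = k i)"
    using hs unfolding heffter_system_def by simp
  have ex: "\<forall>i<r. \<exists>B. B \<in> P i \<and> x \<in> B"
  proof (intro allI impI)
    fix i assume "i < r"
    then have "x \<in> \<Union>(P i)" using hsi x by simp
    then show "\<exists>B. B \<in> P i \<and> x \<in> B" by (simp only: Union_iff) blast
  qed
  then obtain Bf where Bf: "\<And>i. i<r \<Longrightarrow> Bf i \<in> P i \<and> x \<in> Bf i" by metis
  have uniq: "\<And>i B. i<r \<Longrightarrow> B \<in> P i \<Longrightarrow> x \<in> B \<Longrightarrow> B = Bf i"
  proof -
    fix i B assume i: "i<r" "B \<in> P i" "x \<in> B"
    have d: "\<forall>B\<in>P i. \<forall>C\<in>P i. B \<noteq> C \<longrightarrow> B \<inter> C = {}" using hsi i(1) by simp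
    have "B \<inter> Bf i \<noteq> {}" using Bf[OF i(1)] i(3) by auto
    then show "B = Bf i" using d Bf[OF i(1)] i(2) by auto
  qed
  have fin: "\<And>i. i<r \<Longrightarrow> finite (Bf i) \<and> card (Bf i) = k i"
    using Bf hsi by simp
  have sub: "\<And>i. i<r \<Longrightarrow> Bf i \<subseteq> V"
  proof -
    fix i assume i: "i < r"
    have "Bf i \<subseteq> \<Union>(P i)" using Bf[OF i] by (simp only: Union_upper)
    then show "Bf i \<subseteq> V" using hsi[OF i] by simp
  qed
  have disj: "\<forall>i\<in>{..<r}. \<forall>j\<in>{..<r}. i \<noteq> j \<longrightarrow> (Bf i - {x}) \<inter> (Bf j - {x}) = {}"
  proof (intro ballI impI)
    fix i j assume ij: "i \<in> {..<r}" "j \<in> {..<r}" "i \<noteq> j"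
    show "(Bf i - {x}) \<inter> (Bf j - {x}) = {}"
    proof (rule ccontr)
      assume "(Bf i - {x}) \<inter> (Bf j - {x}) \<noteq> {}"
      then obtain z where z: "z \<in> Bf i" "z \<in> Bf j" "z \<noteq> x" by blast
      have "{x, z} \<subseteq> Bf i \<inter> Bf j" using z Bf ij by auto
      then have "card {x, z} \<le> card (Bf i \<inter> Bf j)"
        using fin ij by (meson card_mono finite_Int lessThan_iff)
      moreover have "card (Bf i \<inter> Bf j) \<le> 1"
        using orth ij Bf unfolding orthogonal_hs_def by auto
      ultimately show False using z by simp
    qed
  qed
  define U where "U = (\<Union>i<r. Bf i - {x})"
  have "card U = (\<Sum>i<r. card (Bf i - {x}))"
    unfolding U_def by (rule card_UN_disjoint) (use fin disj in auto)
  also have "\<dots> = (\<Sum>i<r. k i - 1)"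
    by (rule sum.cong) (use fin Bf in auto)
  finally have cU: "int (card U) = (\<Sum>i<r. int (k i)) - int r"
  proof -
    assume "card U = (\<Sum>i<r. k i - 1)"
    then have "int (card U) = (\<Sum>i<r. int (k i - 1))" by simp
    also have "\<dots> = (\<Sum>i<r. int (k i) - 1)"
    proof (rule sum.cong)
      fix i assume "i \<in> {..<r}"
      then have "k i \<ge> 1" using fin Bf
        by (metis card_0_eq empty_iff lessThan_iff less_one not_le)
      then show "int (k i - 1) = int (k i) - 1" by simp
    qed simp
    finally show ?thesis by (simp add: sum_subtractf)
  qed
  have US: "U \<subseteq> V - {x}" unfolding U_def using sub by auto
  have v1: "v \<ge> 1" using cV x by (metis card_0_eq empty_iff finite less_one not_le)
  have cVx: "card (V - {x}) = v - 1" using cV x by simp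
  have le: "card U \<le> v - 1" using US cVx by (metis card_mono finite)
  have eqv: "card U = v - 1 \<longleftrightarrow> U = V - {x}"
    using US cVx by (metis card_subset_eq finite)
  have cov: "U = V - {x} \<longleftrightarrow> (\<forall>y\<in>V. y \<noteq> x \<longrightarrow> (\<exists>i<r. \<exists>B\<in>P i. x \<in> B \<and> y \<in> B))"
  proof
    assume "U = V - {x}"
    then show "\<forall>y\<in>V. y \<noteq> x \<longrightarrow> (\<exists>i<r. \<exists>B\<in>P i. x \<in> B \<and> y \<in> B)"
      unfolding U_def using Bf by blast
  next
    assume c: "\<forall>y\<in>V. y \<noteq> x \<longrightarrow> (\<exists>i<r. \<exists>B\<in>P i. x \<in> B \<and> y \<in> B)"
    show "U = V - {x}"
    proof
      show "U \<subseteq> V - {x}" by (rule US)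
      show "V - {x} \<subseteq> U"
      proof
        fix y assume "y \<in> V - {x}"
        then obtain i B where "i<r" "B \<in> P i" "x \<in> B" "y \<in> B" "y \<noteq> x" using c by blast
        then show "y \<in> U" unfolding U_def using uniq by blast
      qed
    qed
  qed
  show ?thesis using cU le eqv cov v1 by linarith
qed

theorem proposition1p10:
  fixes V :: "'a::{ab_group_add,finite} set"
    and v r :: nat and k :: "nat \<Rightarrow> nat" and P :: "nat \<Rightarrow> 'a set set"
  assumes "v \<ge> 3"
    and "MOHS v V r k P"
  shows "(\<Sum>i<r. int (k i)) - int r \<le> int v - 1 \<and>
         ((\<Sum>i<r. int (k i)) - int r = int v - 1 \<longleftrightarrow> linear_space V (\<Union>i<r. P i))"
proof -
  have hs: "\<forall>i<r. heffter_system V (k i) (P i)"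
    and orth: "\<forall>i<r. \<forall>j<r. i \<noteq> j \<longrightarrow> orthogonal_hs (P i) (P j)"
    using assms(2) unfolding MOHS_def by auto
  have cV: "card V = v"
    using assms(2) card_half unfolding MOHS_def by metis
  have "V \<noteq> {}" using cV assms(1) by auto
  then obtain x0 where x0: "x0 \<in> V" by blast
  note K = key[OF hs orth cV]
  have L: "linear_space V (\<Union>i<r. P i) \<longleftrightarrow>
      (\<forall>x\<in>V. \<forall>y\<in>V. y \<noteq> x \<longrightarrow> (\<exists>i<r. \<exists>B\<in>P i. x \<in> B \<and> y \<in> B))"
  proof
    assume ls: "linear_space V (\<Union>i<r. P i)"
    show "\<forall>x\<in>V. \<forall>y\<in>V. y \<noteq> x \<longrightarrow> (\<exists>i<r. \<exists>B\<in>P i. x \<in> B \<and> y \<in> B)"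
    proof (intro ballI impI)
      fix x y assume xy: "x \<in> V" "y \<in> V" "y \<noteq> x"
      have "\<exists>!B. B \<in> (\<Union>i<r. P i) \<and> x \<in> B \<and> y \<in> B"
        using ls xy unfolding linear_space_def by metis
      then obtain B where "B \<in> (\<Union>i<r. P i)" "x \<in> B" "y \<in> B" by (elim ex1E) blast
      then show "\<exists>i<r. \<exists>B\<in>P i. x \<in> B \<and> y \<in> B" by (simp only: UN_iff lessThan_iff) blast
    qed
  next
    assume c: "\<forall>x\<in>V. \<forall>y\<in>V. y \<noteq> x \<longrightarrow> (\<exists>i<r. \<exists>B\<in>P i. x \<in> B \<and> y \<in> B)"
    show "linear_space V (\<Union>i<r. P i)"
      unfolding linear_space_def
    proof (intro ballI impI)
      fix x y assume xy: "x \<in> V" "y \<in> V" "x \<noteq> y"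
      have "\<exists>i<r. \<exists>B\<in>P i. x \<in> B \<and> y \<in> B" using c xy by simp
      then obtain i B where iB: "i<r" "B \<in> P i" "x \<in> B" "y \<in> B" by blast
      show "\<exists>!B. B \<in> (\<Union>i<r. P i) \<and> x \<in> B \<and> y \<in> B"
      proof (rule ex1I[of _ B])
        show "B \<in> (\<Union>i<r. P i) \<and> x \<in> B \<and> y \<in> B" using iB by blast
      next
        fix B' assume "B' \<in> (\<Union>i<r. P i) \<and> x \<in> B' \<and> y \<in> B'"
        then obtain j where j: "j<r" "B' \<in> P j" "x \<in> B'" "y \<in> B'" by blast
        show "B' = B"
        proof (cases "i = j")
          case True
          have "\<forall>B\<in>P i. \<forall>C\<in>P i. B \<noteq> C \<longrightarrow> B \<inter> C = {}"
            using hs iB(1) unfolding heffter_system_def by simp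
          then show ?thesis using True iB j by blast
        next
          case False
          have "{x, y} \<subseteq> B \<inter> B'" using iB j by auto
          moreover have "finite (B \<inter> B')" by simp
          ultimately have "card {x, y} \<le> card (B \<inter> B')" by (rule card_mono[rotated])
          moreover have "orthogonal_hs (P i) (P j)" using orth iB(1) j(1) False by simp
          then have "card (B \<inter> B') \<le> 1"
            using iB(2) j(2) unfolding orthogonal_hs_def by simp
          ultimately show ?thesis using xy by simp
        qed
      qed
    qed
  qed
  have K2: "\<And>x. x \<in> V \<Longrightarrow> ((\<Sum>i<r. int (k i)) - int r = int v - 1 \<longleftrightarrow>
      (\<forall>y\<in>V. y \<noteq> x \<longrightarrow> (\<exists>i<r. \<exists>B\<in>P i. x \<in> B \<and> y \<in> B)))"
    using K by (rule conjunct2)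
  have eqall: "(\<Sum>i<r. int (k i)) - int r = int v - 1 \<longleftrightarrow>
      (\<forall>x\<in>V. \<forall>y\<in>V. y \<noteq> x \<longrightarrow> (\<exists>i<r. \<exists>B\<in>P i. x \<in> B \<and> y \<in> B))"
  proof
    assume e: "(\<Sum>i<r. int (k i)) - int r = int v - 1"
    show "\<forall>x\<in>V. \<forall>y\<in>V. y \<noteq> x \<longrightarrow> (\<exists>i<r. \<exists>B\<in>P i. x \<in> B \<and> y \<in> B)"
    proof
      fix x assume "x \<in> V"
      from K2[OF this] e show "\<forall>y\<in>V. y \<noteq> x \<longrightarrow> (\<exists>i<r. \<exists>B\<in>P i. x \<in> B \<and> y \<in> B)"
        by (rule iffD1)
    qed
  next
    assume "\<forall>x\<in>V. \<forall>y\<in>V. y \<noteq> x \<longrightarrow> (\<exists>i<r. \<exists>B\<in>P i. x \<in> B \<and> y \<in> B)"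
    then have "\<forall>y\<in>V. y \<noteq> x0 \<longrightarrow> (\<exists>i<r. \<exists>B\<in>P i. x0 \<in> B \<and> y \<in> B)" using x0 by (rule bspec)
    then show "(\<Sum>i<r. int (k i)) - int r = int v - 1" by (rule iffD2[OF K2[OF x0]])
  qed
  have I: "(\<Sum>i<r. int (k i)) - int r \<le> int v - 1" using K[OF x0] by (rule conjunct1)
  show ?thesis using I eqall L by (simp only:)
qed

end
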